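(* Let $q$ be a prime power and $n$ a positive integer coprime to $q$, and write $n=2^{\nu_2(n)}n'$ with $n'$ odd. The following are equivalent: (i) Type-I duadic splittings of $\mathbb{Z}_n$ exist; (ii) Type-I duadic splittings of $\mathbb{Z}_n$ given by some $q$-translation $\tau_t$ exist; (iii) $0<\nu_2(n)<2\,\nu_2(q-1)$. If these hold, then there is an integer $u$ with $\max\{0,\nu_2(n)-\nu_2(q-1)\}\le u<\min\{\nu_2(n),\nu_2(q-1)\}$, and for such $u$, $\tau_{2^u n'}$ is a $q$-translation of $\mathbb{Z}_n$ (i.e. $q\cdot 2^un'\equiv 2^un'\pmod n$) and Type-I duadic splittings of $\mathbb{Z}_n$ given by $\tau_{2^un'}$ exist.
   Context: $\mathbb{Z}_n=\mathbb{Z}/n\mathbb{Z}$, $\mathbb{Z}_n^*$ its unit group. The multiplier $\mu_q:\mathbb{Z}_n\to\mathbb{Z}_n$ is $i\mapsto qi \bmod n$; a subset $P\subseteq\mathbb{Z}_n$ is $\mu_q$-invariant if $\mu_q(P)=P$. For $s\in\mathbb{Z}_n^*$ and $t\in\mathbb{Z}_n$ with $qt\equiv t\pmod n$, $\rho_{s,t}:\mathbb{Z}_n\to\mathbb{Z}_n$, $i\mapsto s(i+t)\bmod n$; $\tau_t=\rho_{1,t}$ is called a $q$-translation. Type-I duadic splittings of $\mathbb{Z}_n$ given by $\rho_{s,t}$ exist if there is a $\mu_q$-invariant $P\subseteq\mathbb{Z}_n$ such that $\mathbb{Z}_n=P\cup\rho_{s,t}(P)$ is a disjoint union; Type-I duadic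 splittings of $\mathbb{Z}_n$ exist if this holds for some such $s,t$. $\nu_2(m)$ is the $2$-adic valuation of a nonzero integer $m$, $\nu_2(0)=\infty$. *)

theory Defs
  imports "HOL-Computational_Algebra.Primes"
begin

text \<open>Z_n is modelled as {0..<n} (n > 0) with arithmetic mod n.\<close>

definition prime_power :: "nat \<Rightarrow> bool" where
  "prime_power q \<longleftrightarrow> (\<exists>p k. prime p \<and> k \<ge> 1 \<and> q = p ^ k)"

definition nu2 :: "nat \<Rightarrow> nat" where
  "nu2 m = multiplicity (2::nat) m"

definition Zn :: "nat \<Rightarrow> nat set" where
  "Zn n = {0..<n}"

definition mu :: "nat \<Rightarrow> nat \<Rightarrow> nat \<Rightarrow> nat" where
  "mu n q i = (q * i) mod n"

definition mu_invariant :: "nat \<Rightarrow> nat \<Rightarrow> nat set \<Rightarrow> bool" where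
  "mu_invariant n q P \<longleftrightarrow> mu n q ` P = P"

definition rho :: "nat \<Rightarrow> nat \<Rightarrow> nat \<Rightarrow> nat \<Rightarrow> nat" where
  "rho n s t i = (s * (i + t)) mod n"

definition tau :: "nat \<Rightarrow> nat \<Rightarrow> nat \<Rightarrow> nat" where
  "tau n t = rho n 1 t"

definition admissible :: "nat \<Rightarrow> nat \<Rightarrow> nat \<Rightarrow> nat \<Rightarrow> bool" where
  "admissible n q s t \<longleftrightarrow> s \<in> Zn n \<and> coprime s n \<and> t \<in> Zn n \<and> (q * t) mod n = t mod n"

definition q_translation :: "nat \<Rightarrow> nat \<Rightarrow> nat \<Rightarrow> bool" where
  "q_translation n q t \<longleftrightarrow> t \<in> Zn n \<and> (q * t) mod n = t mod n"

definition typeI_split_by :: "nat \<Rightarrow> nat \<Rightarrow> nat \<Rightarrow> nat \<Rightarrow> bool" where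
  "typeI_split_by n q s t \<longleftrightarrow> admissible n q s t \<and>
     (\<exists>P. P \<subseteq> Zn n \<and> mu_invariant n q P \<and>
          P \<union> rho n s t ` P = Zn n \<and> P \<inter> rho n s t ` P = {})"

definition typeI_exists :: "nat \<Rightarrow> nat \<Rightarrow> bool" where
  "typeI_exists n q \<longleftrightarrow> (\<exists>s t. typeI_split_by n q s t)"

end

theory Submission
  imports Defs "HOL-Number_Theory.Number_Theory"
begin

lemma swap_even:
  assumes "finite S" "inj_on f S" "f ` (S \<inter> P) \<subseteq> S - P" "f ` (S - P) \<subseteq> S \<inter> P"
  shows "even (card S)"
proof -
  have "card (S \<inter> P) \<le> card (S - P)"
    by (rule card_inj_on_le[OF inj_on_subset[OF assms(2)] assms(3)]) (use assms(1) in auto)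
  moreover have "card (S - P) \<le> card (S \<inter> P)"
    by (rule card_inj_on_le[OF inj_on_subset[OF assms(2)] assms(4)]) (use assms(1) in auto)
  moreover have "card S = card (S \<inter> P) + card (S - P)"
    using assms(1) by (rule card_Int_Diff)
  ultimately show ?thesis by simp
qed

lemma card_class:
  fixes M n a :: nat
  assumes "M dvd n" "n > 0" "a < M"
  shows "card {x \<in> Zn n. x mod M = a} = n div M"
proof -
  have M0: "M > 0" using assms by auto
  obtain N where n: "n = M * N" using assms(1) by blast
  have "{x \<in> Zn n. x mod M = a} = (\<lambda>y. a + M * y) ` {0..<N}"
  proof
    show "{x \<in> Zn n. x mod M = a} \<subseteq> (\<lambda>y. a + M * y) ` {0..<N}"
    proof
      fix x assume x: "x \<in> {x \<in> Zn n. x mod M = a}"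
      hence "x = a + M * (x div M)" using mod_mult_div_eq[of x M] by simp
      moreover have "x div M < N" using x n by (intro less_mult_imp_div_less) (simp add: Zn_def mult.commute)
      ultimately show "x \<in> (\<lambda>y. a + M * y) ` {0..<N}" by (metis atLeastLessThan_iff image_eqI zero_le)
    qed
  next
    show "(\<lambda>y. a + M * y) ` {0..<N} \<subseteq> {x \<in> Zn n. x mod M = a}"
    proof
      fix x assume "x \<in> (\<lambda>y. a + M * y) ` {0..<N}"
      then obtain y where y: "y < N" "x = a + M * y" by auto
      have "a + M * y < M * (y + 1)" using assms(3) by simp
      also have "\<dots> \<le> M * N" using y by (intro mult_le_mono2) simp
      finally show "x \<in> {x \<in> Zn n. x mod M = a}" using y assms(3) n by (simp add: Zn_def)
    qed
  qed
  moreover have "inj_on (\<lambda>y. a + M * y) {0..<N}" using M0 by (auto simp: inj_on_def)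
  ultimately show ?thesis using n M0 by (simp add: card_image)
qed

lemma rho_inj:
  assumes "coprime s n"
  shows "inj_on (rho n s t) (Zn n)"
proof
  fix x y assume xy: "x \<in> Zn n" "y \<in> Zn n" "rho n s t x = rho n s t y"
  hence "[s * (x + t) = s * (y + t)] (mod n)" by (simp add: rho_def cong_def)
  hence "[x + t = y + t] (mod n)" using assms by (simp add: cong_mult_lcancel_nat)
  hence "[x = y] (mod n)" by (simp add: cong_add_rcancel_nat)
  thus "x = y" using xy by (simp add: cong_def Zn_def)
qed

lemma gcd_pow2:
  fixes d v w :: nat
  assumes "\<not> 2^(Suc w) dvd d"
  shows "gcd d (2^v) dvd 2^w"
proof -
  have "gcd d (2^v) dvd 2^v" by simp
  then obtain r where r: "r \<le> v" "gcd d (2^v) = 2^r"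
    using divides_primepow_nat[of 2 "gcd d (2^v)" v] by auto
  have "2^r dvd d" using r(2) by (metis gcd_dvd1)
  hence "r \<le> w" using assms by (metis not_less_eq_eq power_le_dvd)
  thus ?thesis using r(2) by (simp add: le_imp_power_dvd)
qed

lemma class_sol:
  fixes s t M w :: nat
  assumes "s \<ge> 1" "M > 0" "gcd (s - 1) M dvd 2^w" "2^w dvd t"
  shows "\<exists>a < M. (s * (a + t)) mod M = a"
proof -
  define d where "d = s - 1"
  have "gcd (int d) (int M) dvd - int (s * t)"
    using assms(3,4) unfolding d_def
    by (metis dvd_minus_iff dvd_mult dvd_trans gcd_int_int_eq of_nat_dvd_iff)
  then obtain x where x: "[int d * x = - int (s * t)] (mod int M)"
    using cong_solve_dvd_int by blast
  define a where "a = nat (x mod int M)"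
  have ia: "int a = x mod int M" using assms(2) by (simp add: a_def)
  have aM: "a < M" using assms(2) ia by (metis of_nat_less_iff pos_mod_bound of_nat_0_less_iff)
  have "[int a = x] (mod int M)" using ia by (simp add: cong_def)
  hence "[int d * int a = int d * x] (mod int M)" by (simp add: cong_scalar_left)
  hence "[int d * int a = - int (s * t)] (mod int M)" using x by (rule cong_trans)
  hence "[int a + int d * int a + int (s*t) = int a + - int (s * t) + int (s*t)] (mod int M)"
    by (metis cong_add cong_refl add.assoc)
  moreover have "int a + int d * int a + int (s*t) = int (s * (a + t))"
    using assms(1) unfolding d_def by (simp add: algebra_simps of_nat_diff)
  ultimately have "[int (s * (a + t)) = int a] (mod int M)" by simp
  hence "[s * (a + t) = a] (mod M)" using cong_int_iff[of "s * (a + t)" a M] by simp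
  hence "(s * (a + t)) mod M = a" using aM by (simp add: cong_def)
  thus ?thesis using aM by blast
qed

lemma core_contra:
  fixes n s t v w :: nat and P :: "nat set"
  assumes n0: "n > 0" and cop: "coprime s n" and s1: "s \<ge> 1" and PZ: "P \<subseteq> Zn n"
    and sw1: "rho n s t ` P \<subseteq> Zn n - P" and sw2: "rho n s t ` (Zn n - P) \<subseteq> P"
    and Mn: "2^v dvd n" and odd: "odd (n div 2^v)"
    and nd: "\<not> 2^(Suc w) dvd (s - 1)" and wt: "2^w dvd t"
  shows False
proof -
  define M :: nat where "M = 2^v"
  have M0: "M > 0" by (simp add: M_def)
  have "gcd (s - 1) M dvd 2^w" unfolding M_def by (rule gcd_pow2[OF nd])
  then obtain a where a: "a < M" "(s * (a + t)) mod M = a"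
    using class_sol[OF s1 M0 _ wt] by blast
  define S where "S = {x \<in> Zn n. x mod M = a}"
  have cS: "card S = n div M" unfolding S_def using card_class[of M n a] Mn n0 a(1) by (simp add: M_def)
  have fS: "rho n s t x \<in> S" if "x \<in> S" for x
  proof -
    have xa: "x mod M = a" using that by (simp add: S_def)
    have "rho n s t x mod M = (s * (x + t)) mod M"
      using Mn by (simp add: rho_def M_def mod_mod_cancel)
    also have "\<dots> = (s * (x mod M + t)) mod M" by (metis mod_add_left_eq mod_mult_right_eq)
    also have "\<dots> = a" using xa a(2) by simp
    finally show ?thesis using n0 by (simp add: S_def rho_def Zn_def)
  qed
  have SZ: "S \<subseteq> Zn n" by (auto simp: S_def)
  have "even (card S)"
  proof (rule swap_even)
    show "finite S" using SZ by (rule finite_subset) (simp add: Zn_def)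
    show "inj_on (rho n s t) S" using rho_inj[OF cop] SZ by (rule inj_on_subset)
    show "rho n s t ` (S \<inter> P) \<subseteq> S - P" using fS sw1 by blast
    show "rho n s t ` (S - P) \<subseteq> S \<inter> P" using fS sw2 SZ by blast
  qed
  thus False using cS odd by (simp add: M_def)
qed

lemma mu_rho: "mu n q = rho n q 0" by (simp add: fun_eq_iff mu_def rho_def)

lemma card_Zn: "card (Zn n) = n" by (simp add: Zn_def)

lemma forward:
  fixes q n s t :: nat
  assumes q2: "q \<ge> 2" and n0: "n > 0" and cnq: "coprime n q" and sp: "typeI_split_by n q s t"
  shows "0 < nu2 n \<and> nu2 n < 2 * nu2 (q - 1)"
proof -
  obtain P where PZ: "P \<subseteq> Zn n" and muP: "mu n q ` P = P"
    and un: "P \<union> rho n s t ` P = Zn n" and dj: "P \<inter> rho n s t ` P = {}"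
    using sp by (auto simp: typeI_split_by_def mu_invariant_def)
  have adm: "s \<in> Zn n" "coprime s n" "t \<in> Zn n" "(q * t) mod n = t mod n"
    using sp by (auto simp: typeI_split_by_def admissible_def)
  define R where "R = rho n s t"
  have RZ: "R x \<in> Zn n" for x using n0 by (simp add: R_def rho_def Zn_def)
  have injR: "inj_on R (Zn n)" unfolding R_def using adm(2) by (rule rho_inj)
  have sw1: "R ` P \<subseteq> Zn n - P" using un dj unfolding R_def by blast
  have sw2: "R ` (Zn n - P) \<subseteq> P"
  proof
    fix y assume "y \<in> R ` (Zn n - P)"
    then obtain x where x: "x \<in> Zn n" "x \<notin> P" "y = R x" by auto
    show "y \<in> P"
    proof (rule ccontr)
      assume "y \<notin> P"
      hence "y \<in> R ` P" using un RZ x(3) unfolding R_def by blast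
      then obtain z where "z \<in> P" "R z = R x" using x(3) by auto
      thus False using injR x PZ by (metis inj_on_contraD subsetD)
    qed
  qed
  have cqn: "coprime q n" using cnq by (simp add: ac_simps)
  have injmu: "inj_on (mu n q) (Zn n)" unfolding mu_rho using cqn by (rule rho_inj)
  have muZ: "mu n q x \<in> Zn n" for x using n0 by (simp add: mu_def Zn_def)
  have muQ: "mu n q ` (Zn n - P) \<subseteq> Zn n - P"
  proof
    fix y assume "y \<in> mu n q ` (Zn n - P)"
    then obtain x where x: "x \<in> Zn n" "x \<notin> P" "y = mu n q x" by auto
    show "y \<in> Zn n - P"
    proof (rule ccontr)
      assume "y \<notin> Zn n - P"
      hence "y \<in> mu n q ` P" using muZ x(3) muP by blast
      then obtain z where "z \<in> P" "mu n q z = mu n q x" using x(3) by auto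
      thus False using injmu x PZ by (metis inj_on_contraD subsetD)
    qed
  qed
  have "even (card (Zn n))"
  proof (rule swap_even[where P=P and f=R])
    show "finite (Zn n)" by (simp add: Zn_def)
    show "inj_on R (Zn n)" by (rule injR)
    show "R ` (Zn n \<inter> P) \<subseteq> Zn n - P" using sw1 by blast
    show "R ` (Zn n - P) \<subseteq> Zn n \<inter> P" using sw2 PZ by blast
  qed
  hence en: "even n" by (simp add: card_Zn)
  hence v0: "0 < nu2 n" using n0 by (simp add: nu2_def multiplicity_gt_zero_iff)
  have n2: "n \<ge> 2" using en n0 by (metis dvd_imp_le even_two_times_div_two mult_2 add_leD1 Suc_1 Suc_leI le_add1 odd_one antisym not_less_eq_eq)
  have s1: "s \<ge> 1" using adm(2) n2 by (cases s) auto
  define v where "v = nu2 n"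
  define w where "w = nu2 (q - 1)"
  have "\<not> 2 * w \<le> v"
  proof
    assume vw: "2 * w \<le> v"
    have Mn: "2^v dvd n" by (simp add: v_def nu2_def multiplicity_dvd)
    have odd: "odd (n div 2^v)" using multiplicity_decompose[of n 2] n0 by (simp add: v_def nu2_def)
    obtain oo where qo: "q - 1 = 2^w * oo" "\<not> 2 dvd oo"
      using multiplicity_decompose'[of "q - 1" 2] q2 unfolding w_def nu2_def by force
    have nqt: "n dvd (q - 1) * t"
      using adm(4) mod_eq_dvd_iff_nat[of t "q * t" n] q2 by (simp add: diff_mult_distrib)
    have "2^(v - w) * 2^w dvd 2^w * (oo * t)"
      using dvd_trans[OF Mn nqt] vw qo(1) by (simp add: power_add[symmetric] mult.assoc)
    hence "2^(v - w) dvd oo * t" by (simp add: mult.commute)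
    moreover have "coprime (2^(v-w)) oo" using qo(2) by simp
    ultimately have "2^(v - w) dvd t" using coprime_dvd_mult_right_iff by blast
    hence wt: "2^w dvd t" using vw by (metis dvd_trans le_imp_power_dvd diff_le_mono mult_2 add_diff_cancel_right')
    have nq: "\<not> 2^(Suc w) dvd (q - 1)" using power_dvd_iff_le_multiplicity[of "q - 1" "2::nat" "Suc w"] q2 unfolding w_def nu2_def by simp
    show False
    proof (cases "2^(Suc w) dvd (s - 1)")
      case False
      show False by (rule core_contra[OF n0 adm(2) s1 PZ sw1[unfolded R_def] sw2[unfolded R_def] Mn odd False wt])
    next
      case True
      have eq: "rho n (q * s) t x = mu n q (R x)" for x
        by (simp add: R_def rho_def mu_def mod_mult_right_eq mult.assoc)
      have sw1': "rho n (q * s) t ` P \<subseteq> Zn n - P"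
      proof -
        have "rho n (q * s) t ` P = mu n q ` (R ` P)" by (simp add: eq image_image)
        also have "\<dots> \<subseteq> mu n q ` (Zn n - P)" using sw1 by (rule image_mono)
        finally show ?thesis using muQ by blast
      qed
      have sw2': "rho n (q * s) t ` (Zn n - P) \<subseteq> P"
      proof -
        have "rho n (q * s) t ` (Zn n - P) = mu n q ` (R ` (Zn n - P))" by (simp add: eq image_image)
        also have "\<dots> \<subseteq> mu n q ` P" using sw2 by (rule image_mono)
        finally show ?thesis using muP by blast
      qed
      have cop': "coprime (q * s) n" using cqn adm(2) by simp
      have qs1: "q * s \<ge> 1" using q2 s1 by (simp add: Suc_le_eq)
      have nd: "\<not> 2^(Suc w) dvd (q * s - 1)"
      proof
        assume h: "2^(Suc w) dvd (q * s - 1)"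
        have "2^(Suc w) dvd q * (s - 1)" using True by simp
        hence "2^(Suc w) dvd (q * s - 1) - q * (s - 1)" by (rule dvd_diff_nat[OF h])
        moreover have "(q * s - 1) - q * (s - 1) = q - 1" using q2 s1
          by (simp add: diff_mult_distrib2) 
        ultimately show False using nq by simp
      qed
      show False by (rule core_contra[OF n0 cop' qs1 PZ sw1' sw2' Mn odd nd wt])
    qed
  qed
  thus ?thesis using v0 by (simp add: v_def w_def)
qed

lemma addmod: "(m::nat) dvd b \<Longrightarrow> (a + b) mod m = a mod m"
  by (metis add.right_neutral dvd_imp_mod_0 mod_add_right_eq)

lemma flip:
  fixes x u :: nat
  shows "((x + 2^u) mod 2^(Suc u) < 2^u) \<longleftrightarrow> \<not> (x mod 2^(Suc u) < 2^u)"
proof -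
  define M :: nat where "M = 2^(Suc u)"
  define r where "r = x mod M"
  have M: "M = 2^u + 2^u" by (simp add: M_def)
  have rM: "r < M" by (simp add: r_def M_def)
  have e: "(x + 2^u) mod M = (r + 2^u) mod M" by (simp add: r_def mod_add_left_eq)
  have "((x + 2^u) mod M < 2^u) \<longleftrightarrow> \<not> (r < 2^u)"
  proof (cases "r < 2^u")
    case True
    hence "(r + 2^u) mod M = r + 2^u" using M by simp
    thus ?thesis using True e by simp
  next
    case False
    hence "(r + 2^u) mod M = r - 2^u" using M rM by (simp add: mod_if)
    thus ?thesis using False e rM M by simp
  qed
  thus ?thesis by (simp only: M_def r_def)
qed

lemma construct:
  fixes q n u :: nat
  assumes q2: "q \<ge> 2" and n0: "n > 0" and cnq: "coprime n q"
    and u1: "nu2 n \<le> u + nu2 (q - 1)" and u2: "u < nu2 n" and u3: "u < nu2 (q - 1)"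
  shows "q_translation n q (2^u * (n div 2^nu2 n)) \<and> typeI_split_by n q 1 (2^u * (n div 2^nu2 n))"
proof -
  define v where "v = nu2 n"
  define w where "w = nu2 (q - 1)"
  define n' where "n' = n div 2^v"
  define t where "t = 2^u * n'"
  define M :: nat where "M = 2^(Suc u)"
  have nn: "n = 2^v * n'" unfolding n'_def v_def nu2_def using multiplicity_dvd[of 2 n] by simp
  have odd: "odd n'" using multiplicity_decompose[of n 2] n0 by (simp add: v_def nu2_def n'_def)
  have n'0: "n' > 0" using odd by (cases n') auto
  have wq: "2^w dvd q - 1" by (simp add: w_def nu2_def multiplicity_dvd)
  have tn: "t < n" unfolding t_def nn using u2 n'0 by (simp add: v_def)
  have "(2::nat)^v dvd 2^(u + w)" using u1 by (simp add: v_def w_def le_imp_power_dvd)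
  also have "2^(u + w) dvd 2^u * (q - 1)" using wq by (simp add: power_add)
  finally have "2^v * n' dvd 2^u * (q - 1) * n'" by simp
  hence ndt: "n dvd (q - 1) * t" by (simp add: nn t_def ac_simps)
  have qt: "(q * t) mod n = t mod n"
  proof -
    have "q * t = t + (q - 1) * t" using q2 by (simp add: algebra_simps)
    thus ?thesis using ndt by (simp add: addmod)
  qed
  have "M dvd 2^v" unfolding M_def using u2 by (intro le_imp_power_dvd) (simp add: v_def)
  hence Mn: "M dvd n" unfolding nn by (rule dvd_mult2)
  have "M dvd 2^w" unfolding M_def using u3 by (intro le_imp_power_dvd) (simp add: w_def)
  hence Mq: "M dvd q - 1" using wq by (rule dvd_trans)
  obtain k where k: "n' = 2 * k + 1" using odd oddE by blast
  have tM: "t = 2^u + M * k" by (simp add: t_def k M_def algebra_simps)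
  have F1: "(q * x mod n) mod M = x mod M" for x
  proof -
    have "(q * x mod n) mod M = (q * x) mod M" using Mn by (simp add: mod_mod_cancel)
    moreover have "q * x = x + (q - 1) * x" using q2 by (simp add: algebra_simps)
    moreover have "(x + (q - 1) * x) mod M = x mod M" using Mq by (simp add: addmod)
    ultimately show ?thesis by simp
  qed
  have F2: "(((x + t) mod n) mod M < 2^u) \<longleftrightarrow> \<not> (x mod M < 2^u)" for x
  proof -
    have "((x + t) mod n) mod M = (x + t) mod M" using Mn by (simp add: mod_mod_cancel)
    also have "\<dots> = (x + 2^u) mod M" by (simp add: tM add.assoc[symmetric])
    finally show ?thesis using flip[of x u] by (simp add: M_def)
  qed
  define P where "P = {x \<in> Zn n. x mod M < 2^u}"
  have n2: "n \<ge> 2" using Mn n0 M_def by (metis dvd_imp_le le_trans one_le_numeral self_le_power Suc_le_eq mult_2 zero_less_Suc le_add1 power_Suc)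
  have adm: "admissible n q 1 t" using n2 tn qt by (simp add: admissible_def Zn_def)
  have muinv: "mu_invariant n q P"
    unfolding mu_invariant_def
  proof
    show "mu n q ` P \<subseteq> P" using F1 n0 by (auto simp: P_def mu_def Zn_def)
  next
    show "P \<subseteq> mu n q ` P"
    proof
      fix y assume y: "y \<in> P"
      obtain q' where q': "[q * q' = Suc 0] (mod n)"
        using cong_solve_coprime_nat[of q n] cnq by (auto simp: ac_simps)
      define x where "x = (q' * y) mod n"
      have "mu n q x = (q * q' * y) mod n" by (simp add: mu_def x_def mod_mult_right_eq mult.assoc)
      also have "\<dots> = y mod n" using q' by (metis cong_def mod_mult_left_eq mult_1 Suc_eq_plus1 add_0 One_nat_def)
      also have "\<dots> = y" using y by (simp add: P_def Zn_def)
      finally have mx: "mu n q x = y" .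
      have "x mod M < 2^u" using F1[of x] mx y by (simp add: P_def mu_def)
      hence "x \<in> P" using n0 by (simp add: P_def x_def Zn_def)
      thus "y \<in> mu n q ` P" using mx by blast
    qed
  qed
  have rh: "rho n 1 t x = (x + t) mod n" for x by (simp add: rho_def)
  have un: "P \<union> rho n 1 t ` P = Zn n"
  proof
    show "P \<union> rho n 1 t ` P \<subseteq> Zn n" using n0 by (auto simp: P_def rho_def Zn_def)
  next
    show "Zn n \<subseteq> P \<union> rho n 1 t ` P"
    proof
      fix y assume y: "y \<in> Zn n"
      show "y \<in> P \<union> rho n 1 t ` P"
      proof (cases "y \<in> P")
        case False
        define x where "x = (y + (n - t)) mod n"
        have rx: "rho n 1 t x = y"
        proof -
          have "rho n 1 t x = (y + (n - t) + t) mod n" by (simp add: rho_def x_def mod_add_left_eq)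
          also have "y + (n - t) + t = y + n" using tn by simp
          finally show ?thesis using y by (simp add: Zn_def)
        qed
        have "\<not> (y mod M < 2^u)" using False y by (simp add: P_def)
        hence "x mod M < 2^u" using F2[of x] rx by (simp add: rho_def)
        hence "x \<in> P" using n0 by (simp add: P_def x_def Zn_def)
        thus ?thesis using rx by blast
      qed simp
    qed
  qed
  have dj: "P \<inter> rho n 1 t ` P = {}"
    using F2 by (auto simp: P_def rho_def)
  show ?thesis using adm muinv un dj tn qt
    unfolding q_translation_def typeI_split_by_def
    by (auto simp: t_def n'_def v_def P_def Zn_def)
qed

theorem theorem3p10:
  fixes q n :: nat
  assumes "prime_power q" and "n > 0" and "coprime n q"
  defines "n' \<equiv> n div 2 ^ nu2 n"
  shows "(typeI_exists n q \<longleftrightarrow> (\<exists>t. q_translation n q t \<and> typeI_split_by n q 1 t))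
       \<and> ((\<exists>t. q_translation n q t \<and> typeI_split_by n q 1 t)
            \<longleftrightarrow> (0 < nu2 n \<and> nu2 n < 2 * nu2 (q - 1)))
       \<and> (typeI_exists n q \<longrightarrow>
            (\<exists>u::nat. max 0 (int (nu2 n) - int (nu2 (q - 1))) \<le> int u
                      \<and> u < min (nu2 n) (nu2 (q - 1)))
          \<and> (\<forall>u::nat. max 0 (int (nu2 n) - int (nu2 (q - 1))) \<le> int u
                      \<and> u < min (nu2 n) (nu2 (q - 1)) \<longrightarrow>
                q_translation n q (2 ^ u * n')
              \<and> (q * (2 ^ u * n')) mod n = (2 ^ u * n') mod n
              \<and> typeI_split_by n q 1 (2 ^ u * n')))"
proof -
  obtain p k where pk: "prime p" "k \<ge> 1" "q = p ^ k" using assms(1) by (auto simp: prime_power_def)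
  have "p \<ge> 2" using pk(1) by (rule prime_ge_2_nat)
  moreover have "p \<le> p ^ k" using `p \<ge> 2` pk(2) by (intro self_le_power) auto
  ultimately have q2: "q \<ge> 2" using pk(3) by linarith
  define v where "v = nu2 n"
  define w where "w = nu2 (q - 1)"
  have i_iii: "0 < v \<and> v < 2 * w" if ex: "typeI_exists n q"
  proof -
    obtain s t where "typeI_split_by n q s t" using ex unfolding typeI_exists_def by blast
    thus ?thesis using forward[OF q2 assms(2,3)] by (simp add: v_def w_def)
  qed
  have cons: "q_translation n q (2^u * n') \<and> typeI_split_by n q 1 (2^u * n')"
    if "max 0 (int v - int w) \<le> int u" "u < min v w" for u
  proof -
    have "v \<le> u + w" using that(1) by linarith
    moreover have "u < v" "u < w" using that(2) by auto
    ultimately show ?thesis unfolding n'_def using construct[OF q2 assms(2,3), of u]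
      by (simp add: v_def w_def)
  qed
  have ex_u: "\<exists>u::nat. max 0 (int v - int w) \<le> int u \<and> u < min v w"
    if "0 < v \<and> v < 2 * w"
  proof (intro exI conjI)
    show "max 0 (int v - int w) \<le> int (v - w)" by (cases "w \<le> v") (auto simp: of_nat_diff)
    show "v - w < min v w" using that by auto
  qed
  have iii_ii: "\<exists>t. q_translation n q t \<and> typeI_split_by n q 1 t"
    if "0 < v \<and> v < 2 * w"
    using ex_u[OF that] cons by blast
  have ii_i: "typeI_exists n q" if "\<exists>t. q_translation n q t \<and> typeI_split_by n q 1 t"
    using that by (auto simp: typeI_exists_def)
  have last: "q_translation n q (2 ^ u * n') \<and> (q * (2 ^ u * n')) mod n = (2 ^ u * n') mod n
              \<and> typeI_split_by n q 1 (2 ^ u * n')"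
    if "max 0 (int v - int w) \<le> int u \<and> u < min v w" for u
    using cons[of u] that by (simp add: q_translation_def)
  have A: "typeI_exists n q \<longleftrightarrow> (\<exists>t. q_translation n q t \<and> typeI_split_by n q 1 t)"
    using i_iii iii_ii ii_i by blast
  have B: "(\<exists>t. q_translation n q t \<and> typeI_split_by n q 1 t) \<longleftrightarrow> (0 < v \<and> v < 2 * w)"
    using i_iii iii_ii ii_i by blast
  have C: "typeI_exists n q \<longrightarrow>
            (\<exists>u::nat. max 0 (int v - int w) \<le> int u \<and> u < min v w)
          \<and> (\<forall>u::nat. max 0 (int v - int w) \<le> int u \<and> u < min v w \<longrightarrow>
                q_translation n q (2 ^ u * n')
              \<and> (q * (2 ^ u * n')) mod n = (2 ^ u * n') mod n
              \<and> typeI_split_by n q 1 (2 ^ u * n'))"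
    using i_iii ex_u last by blast
  show ?thesis using A B C unfolding v_def w_def by blast
qed

end
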